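(* For every $x\in\Gamma$ and $t\in\Gamma'_x$, the function $P_{x,t}$ defined below is a polynomial with real coefficients and positive leading coefficient. For every nonreal $z$ there is a nonzero function $v:\Gamma\to\mathbb C$ with $Jv=zv$ on all of $\Gamma$ and $v(t)=P_{x,t}(z)$ for all $t\in\Gamma'_x$. Moreover, if $y\in\Gamma_x$ and $t\in\Gamma'_y$ (so $\Gamma'_y\subset\Gamma'_x$), then $P_{y,t}$ divides $P_{x,t}$.
   Context: Let $\Gamma$ be an infinite connected tree whose vertices are arranged in levels $\ell(x)\in\{0,1,2,\dots\}$: every vertex $x$ is adjacent to exactly one vertex $x'$ with $\ell(x')=\ell(x)+1$; for $\ell(x)\ge 1$ the set $N_x=\{y:\ y'=x\}$ of neighbours of $x$ on level $\ell(x)-1$ is finite and nonempty; $N_x=\emptyset$ if $\ell(x)=0$; there are no other edges. For $x\in\Gamma$, $\Gamma_x$ is the finite subtree consisting of $x$ and all its descendants, and $\Gamma'_x=\Gamma_x\cup\{x'\}$. Fix $\lambda_x>0$, $\beta_x\in\mathbb R$. The Jacobi matrix $J$ acts on functions $v:\Gamma\to\mathbb C$ by $(Jv)(x)=\lambda_x v(x')+\beta_x v(x)+\sum_{y\in N_x}\lambda_y v(y)$. The functions $P_{x,t}$ ($x\in\Gamma$, $t\in\Gamma'_x$) of the variable $z$ are defined recursively on $\ell(x)$: if $\ell(x)=0$, $P_{x,x}=1$ and $P_{x,x'}(z)=(z-\beta_x)/\lambda_x$. If $\ell(x)\ge1$: $P_{x,x}$ is the monic least common multiple of the polynomials $\{P_{y,x}:\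 y\in N_x\}$; for $y\in N_x$ and $t\in\Gamma_y$, $P_{x,t}=P_{x,x}P_{y,t}/P_{y,x}$; and $P_{x,x'}=\lambda_x^{-1}\big((z-\beta_x)P_{x,x}-\sum_{y\in N_x}\lambda_yP_{x,y}\big)$. *)

theory Defs
  imports "HOL-Computational_Algebra.Computational_Algebra" "HOL-Computational_Algebra.Field_as_Ring"
begin

text \<open>The tree: vertices are the elements of the type 'a, p x is the parent x',
  lev x the level. children p x = N_x, desc p x = Gamma_x (x and its descendants).\<close>

definition children :: "('a \<Rightarrow> 'a) \<Rightarrow> 'a \<Rightarrow> 'a set" where
  "children p x = {y. p y = x}"

definition desc :: "('a \<Rightarrow> 'a) \<Rightarrow> 'a \<Rightarrow> 'a set" where
  "desc p x = {t. \<exists>k. (p ^^ k) t = x}"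

definition desc' :: "('a \<Rightarrow> 'a) \<Rightarrow> 'a \<Rightarrow> 'a set" where
  "desc' p x = insert (p x) (desc p x)"

definition tree_levels :: "('a \<Rightarrow> 'a) \<Rightarrow> ('a \<Rightarrow> nat) \<Rightarrow> bool" where
  "tree_levels p lev \<longleftrightarrow>
     (\<forall>x. lev (p x) = Suc (lev x)) \<and>
     (\<forall>x. lev x \<ge> 1 \<longrightarrow> finite (children p x) \<and> children p x \<noteq> {}) \<and>
     (\<forall>x. lev x = 0 \<longrightarrow> children p x = {}) \<and>
     (\<forall>x y. \<exists>m n. (p ^^ m) x = (p ^^ n) y)"

definition Jac :: "('a \<Rightarrow> 'a) \<Rightarrow> ('a \<Rightarrow> real) \<Rightarrow> ('a \<Rightarrow> real) \<Rightarrow> ('a \<Rightarrow> complex) \<Rightarrow> 'a \<Rightarrow> complex" where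
  "Jac p lam beta v x = of_real (lam x) * v (p x) + of_real (beta x) * v x
      + (\<Sum>y\<in>children p x. of_real (lam y) * v y)"

text \<open>Pfun n x t is P_{x,t} for lev x = n (recursion on the level); 0 outside Gamma'_x.\<close>
primrec Pfun :: "('a \<Rightarrow> 'a) \<Rightarrow> ('a \<Rightarrow> real) \<Rightarrow> ('a \<Rightarrow> real) \<Rightarrow> nat \<Rightarrow> 'a \<Rightarrow> 'a \<Rightarrow> real poly" where
  "Pfun p lam beta 0 x t =
     (if t = x then 1 else if t = p x then [:- beta x / lam x, 1 / lam x:] else 0)"
| "Pfun p lam beta (Suc n) x t =
     (let Q = Pfun p lam beta n;
          Pxx = Lcm ((\<lambda>y. Q y x) ` children p x)
      in if t = x then Pxx
         else if t = p x then
           smult (1 / lam x) ([:- beta x, 1:] * Pxx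
             - (\<Sum>y\<in>children p x. smult (lam y) (Pxx * Q y y div Q y x)))
         else if t \<in> desc p x then
           (let y = (THE y. y \<in> children p x \<and> t \<in> desc p y) in Pxx * Q y t div Q y x)
         else 0)"

definition Ptree :: "('a \<Rightarrow> 'a) \<Rightarrow> ('a \<Rightarrow> nat) \<Rightarrow> ('a \<Rightarrow> real) \<Rightarrow> ('a \<Rightarrow> real) \<Rightarrow> 'a \<Rightarrow> 'a \<Rightarrow> real poly" where
  "Ptree p lev lam beta x t = Pfun p lam beta (lev x) x t"

end

theory Submission
  imports Defs
begin

definition Ev :: "complex \<Rightarrow> real poly \<Rightarrow> complex" where
  "Ev z q = poly (map_poly complex_of_real q) z"

lemma map_of_real_mult: "map_poly complex_of_real (a * b) = map_poly of_real a * map_poly of_real b"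
  by (intro poly_eqI) (simp add: coeff_map_poly coeff_mult)

lemma map_of_real_add: "map_poly complex_of_real (a + b) = map_poly of_real a + map_poly of_real b"
  by (intro poly_eqI) (simp add: coeff_map_poly)

lemma map_of_real_diff: "map_poly complex_of_real (a - b) = map_poly of_real a - map_poly of_real b"
  by (intro poly_eqI) (simp add: coeff_map_poly)

lemma Ev_mult: "Ev z (a * b) = Ev z a * Ev z b"
  by (simp add: Ev_def map_of_real_mult)
lemma Ev_add: "Ev z (a + b) = Ev z a + Ev z b"
  by (simp add: Ev_def map_of_real_add)
lemma Ev_diff: "Ev z (a - b) = Ev z a - Ev z b"
  by (simp add: Ev_def map_of_real_diff)
lemma Ev_smult: "Ev z (smult c a) = of_real c * Ev z a"
  by (simp add: Ev_def map_poly_smult)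
lemma Ev_one: "Ev z 1 = 1"
  by (simp add: Ev_def)
lemma Ev_lin: "Ev z [:a, 1:] = z + of_real a"
  by (simp add: Ev_def map_poly_pCons)
lemma Ev_zero: "Ev z 0 = 0" by (simp add: Ev_def)
lemma Ev_sum: "Ev z (sum f A) = (\<Sum>a\<in>A. Ev z (f a))"
  by (induction A rule: infinite_finite_induct) (simp_all add: Ev_add Ev_zero)
lemma Ev_prod: "Ev z (prod f A) = (\<Prod>a\<in>A. Ev z (f a))"
  by (induction A rule: infinite_finite_induct) (auto simp: Ev_mult Ev_one)

lemma lc_Lcm: "(Lcm A :: real poly) \<noteq> 0 \<Longrightarrow> lead_coeff (Lcm A) = 1"
proof -
  assume "Lcm A \<noteq> 0"
  hence "unit_factor (Lcm A) = 1" by (simp add: unit_factor_Lcm)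
  thus ?thesis by (simp add: unit_factor_poly_def one_pCons)
qed

locale jt =
  fixes p :: "'a \<Rightarrow> 'a" and lev :: "'a \<Rightarrow> nat" and lam beta :: "'a \<Rightarrow> real"
  assumes tree: "tree_levels p lev"
    and lam_pos: "\<forall>x. lam x > 0"
begin

lemma lev_p[simp]: "lev (p x) = Suc (lev x)"
  using tree by (simp add: tree_levels_def)

lemma lev_funpow: "lev ((p ^^ k) t) = lev t + k"
  by (induction k) auto

lemma connected: "\<exists>m n. (p ^^ m) x = (p ^^ n) y"
  using tree by (simp add: tree_levels_def)

lemma children_fin: "finite (children p x)"
proof (cases "lev x = 0")
  case True thus ?thesis using tree by (simp add: tree_levels_def)
next
  case False thus ?thesis using tree by (simp add: tree_levels_def)
qed

lemma children_ne: "lev x = Suc n \<Longrightarrow> children p x \<noteq> {}"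
  using tree by (simp add: tree_levels_def)

lemma children0: "lev x = 0 \<Longrightarrow> children p x = {}"
  using tree by (simp add: tree_levels_def)

lemma child_lev: "c \<in> children p x \<Longrightarrow> lev x = Suc (lev c)"
  by (auto simp: children_def)

lemma child_p: "c \<in> children p x \<Longrightarrow> p c = x"
  by (auto simp: children_def)

lemma desc_lev: "t \<in> desc p x \<Longrightarrow> lev t \<le> lev x"
  by (auto simp: desc_def lev_funpow)

lemma self_desc[simp]: "x \<in> desc p x"
  unfolding desc_def by (rule CollectI, rule exI[of _ 0]) simp

lemma desc_trans: "u \<in> desc p w \<Longrightarrow> t \<in> desc p u \<Longrightarrow> t \<in> desc p w"
proof -
  assume "u \<in> desc p w" "t \<in> desc p u"
  then obtain k j where "(p ^^ k) u = w" "(p ^^ j) t = u" by (auto simp: desc_def)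
  hence "(p ^^ (k + j)) t = w" by (simp add: funpow_add)
  thus ?thesis by (auto simp: desc_def)
qed

lemma child_desc: "c \<in> children p x \<Longrightarrow> c \<in> desc p x"
  unfolding desc_def children_def by (auto intro!: exI[of _ 1])

lemma desc_cases: "t \<in> desc p x \<Longrightarrow> t = x \<or> (\<exists>c\<in>children p x. t \<in> desc p c)"
proof -
  assume "t \<in> desc p x"
  then obtain k where k: "(p ^^ k) t = x" by (auto simp: desc_def)
  show ?thesis
  proof (cases k)
    case 0 thus ?thesis using k by simp
  next
    case (Suc j)
    hence "p ((p ^^ j) t) = x" using k by simp
    thus ?thesis by (auto simp: children_def desc_def)
  qed
qed

lemma desc_unique: "c1 \<in> children p x \<Longrightarrow> c2 \<in> children p x \<Longrightarrow> t \<in> desc p c1 \<Longrightarrow> t \<in> desc p c2 \<Longrightarrow> c1 = c2"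
proof -
  assume a: "c1 \<in> children p x" "c2 \<in> children p x" "t \<in> desc p c1" "t \<in> desc p c2"
  then obtain k j where k: "(p ^^ k) t = c1" "(p ^^ j) t = c2" by (auto simp: desc_def)
  have "lev c1 = lev c2" using child_lev[OF a(1)] child_lev[OF a(2)] by simp
  hence "k = j" using k lev_funpow by (metis add_left_cancel)
  thus ?thesis using k by simp
qed

lemma parent_not_desc: "p x \<notin> desc p x"
  using desc_lev[of "p x" x] by auto

lemma x_not_desc_child: "c \<in> children p x \<Longrightarrow> x \<notin> desc p c"
  using desc_lev[of x c] child_lev[of c x] by auto

lemma desc_mono: "u \<in> desc p w \<Longrightarrow> desc p u \<subseteq> desc p w"
  using desc_trans by blast

lemma desc'_mono: "u \<in> desc p w \<Longrightarrow> desc' p u \<subseteq> desc' p w"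
proof -
  assume u: "u \<in> desc p w"
  then obtain k where k: "(p ^^ k) u = w" by (auto simp: desc_def)
  have "p u \<in> desc' p w"
  proof (cases k)
    case 0 thus ?thesis using k by (simp add: desc'_def)
  next
    case (Suc j)
    hence "(p ^^ j) (p u) = w" using k by (simp add: funpow_Suc_right del: funpow.simps)
    thus ?thesis by (auto simp: desc'_def desc_def)
  qed
  thus ?thesis using desc_mono[OF u] by (auto simp: desc'_def)
qed

lemma desc_in_desc': "desc p x \<subseteq> desc' p x" by (auto simp: desc'_def)

lemma desc0: "lev x = 0 \<Longrightarrow> desc p x = {x}"
  using desc_cases children0 by fastforce

abbreviation P where "P \<equiv> Ptree p lev lam beta"

lemma px_ne[simp]: "p x \<noteq> x"
  using lev_p[of x] by (metis n_not_Suc_n)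

lemma P0_xx: "lev x = 0 \<Longrightarrow> P x x = 1"
  by (simp add: Ptree_def)

lemma P0_px: "lev x = 0 \<Longrightarrow> P x (p x) = [:- beta x / lam x, 1 / lam x:]"
  by (simp add: Ptree_def)

lemma Pfun_child: "lev x = Suc n \<Longrightarrow> y \<in> children p x \<Longrightarrow> Pfun p lam beta n y = P y"
  using child_lev[of y x] by (auto simp: Ptree_def fun_eq_iff)

lemma PS_xx: "lev x = Suc n \<Longrightarrow> P x x = Lcm ((\<lambda>y. P y x) ` children p x)"
proof -
  assume l: "lev x = Suc n"
  have "(\<lambda>y. Pfun p lam beta n y x) ` children p x = (\<lambda>y. P y x) ` children p x"
    using Pfun_child[OF l] by (intro image_cong) auto
  thus ?thesis using l by (simp add: Ptree_def Let_def)
qed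

lemma PS_t: "lev x = Suc n \<Longrightarrow> c \<in> children p x \<Longrightarrow> t \<in> desc p c \<Longrightarrow> P x t = P x x * P c t div P c x"
proof -
  assume l: "lev x = Suc n" and c: "c \<in> children p x" and t: "t \<in> desc p c"
  have tx: "t \<noteq> x" using x_not_desc_child[OF c] t by auto
  have tpx: "t \<noteq> p x" using desc_lev[OF t] child_lev[OF c] by auto
  have td: "t \<in> desc p x" using desc_trans[OF child_desc[OF c] t] .
  have the: "(THE y. y \<in> children p x \<and> t \<in> desc p y) = c"
    using c t desc_unique by blast
  have "P x t = Lcm ((\<lambda>y. Pfun p lam beta n y x) ` children p x) * Pfun p lam beta n c t div Pfun p lam beta n c x"
    using l tx tpx td the by (simp add: Ptree_def Let_def)
  also have "\<dots> = P x x * P c t div P c x"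
    using PS_xx[OF l] Pfun_child[OF l] c
    by (metis (no_types, lifting) image_cong)
  finally show ?thesis .
qed

lemma PS_px: "lev x = Suc n \<Longrightarrow> P x (p x) = smult (1 / lam x) ([:- beta x, 1:] * P x x
             - (\<Sum>y\<in>children p x. smult (lam y) (P x y)))"
proof -
  assume l: "lev x = Suc n"
  have s: "(\<Sum>y\<in>children p x. smult (lam y) (P x x * Pfun p lam beta n y y div Pfun p lam beta n y x))
     = (\<Sum>y\<in>children p x. smult (lam y) (P x y))"
    using PS_t[OF l] Pfun_child[OF l] child_desc by (intro sum.cong) auto
  have "P x (p x) = smult (1 / lam x) ([:- beta x, 1:] * Lcm ((\<lambda>y. Pfun p lam beta n y x) ` children p x)
             - (\<Sum>y\<in>children p x. smult (lam y) (Lcm ((\<lambda>y. Pfun p lam beta n y x) ` children p x) * Pfun p lam beta n y y div Pfun p lam beta n y x)))"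
    using l by (simp add: Ptree_def Let_def)
  also have "Lcm ((\<lambda>y. Pfun p lam beta n y x) ` children p x) = P x x"
    using PS_xx[OF l] Pfun_child[OF l] by (metis (no_types, lifting) image_cong)
  finally show ?thesis using s by simp
qed

lemma Ev_pair: "Ev z [:a, b:] = of_real a + z * of_real b"
  by (simp add: Ev_def map_poly_pCons)

definition good where
  "good x \<longleftrightarrow> P x x \<noteq> 0 \<and> lead_coeff (P x x) > 0 \<and> degree (P x (p x)) = Suc (degree (P x x))
     \<and> lead_coeff (P x (p x)) > 0 \<and> (\<forall>t\<in>desc p x. lead_coeff (P x t) > 0)
     \<and> (\<forall>z. Im z \<noteq> 0 \<longrightarrow> Ev z (P x x) \<noteq> 0 \<and> Ev z (P x (p x)) \<noteq> 0
          \<and> Im z * Im (Ev z (P x (p x)) / Ev z (P x x)) > 0)"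

lemma good0: "lev x = 0 \<Longrightarrow> good x"
proof -
  assume l: "lev x = 0"
  have lp: "lam x > 0" using lam_pos by simp
  have d: "degree [:- beta x / lam x, 1 / lam x:] = 1" using lp by simp
  have "Im z * Im (Ev z (P x (p x)) / Ev z (P x x)) > 0" if "Im z \<noteq> 0" for z
  proof -
    have "Im z * Im (Ev z (P x (p x)) / Ev z (P x x)) = Im z * Im z / lam x"
      using l by (simp add: P0_xx P0_px Ev_pair Ev_one)
    thus ?thesis using that lp by (metis divide_pos_pos not_real_square_gt_zero)
  qed
  moreover have "Ev z (P x (p x)) \<noteq> 0" if "Im z \<noteq> 0" for z
    using l lp that by (auto simp add: P0_px Ev_pair complex_eq_iff)
  ultimately show ?thesis using l lp d
    by (auto simp: good_def P0_xx P0_px desc0 Ev_one)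
qed

lemma degree_sum_lt: "(\<And>a. a \<in> A \<Longrightarrow> degree (f a) < d) \<Longrightarrow> 0 < d \<Longrightarrow> degree (sum f A) < d"
  by (rule degree_sum_less)

lemma goodS:
  assumes l: "lev x = Suc n" and IH: "\<And>c. c \<in> children p x \<Longrightarrow> good c"
  shows "good x"
proof -
  define C where "C = children p x"
  have finC: "finite C" using children_fin by (simp add: C_def)
  have neC: "C \<noteq> {}" using children_ne[OF l] by (simp add: C_def)
  have pc: "p c = x" if "c \<in> C" for c using that child_p by (simp add: C_def)
  have gc: "good c" if "c \<in> C" for c using IH that by (simp add: C_def)
  define A where "A = P x x"
  have A: "A = Lcm ((\<lambda>y. P y x) ` C)" using PS_xx[OF l] by (simp add: A_def C_def)
  have Pcx0: "P c x \<noteq> 0" if "c \<in> C" for c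
    using gc[OF that] pc[OF that] by (auto simp: good_def)
  have A0: "A \<noteq> 0" using A finC Pcx0 by (auto simp: Lcm_0_iff)
  have lcA: "lead_coeff A = 1" using A A0 lc_Lcm by simp
  define q where "q c = A div P c x" for c
  have dvdA: "P c x dvd A" if "c \<in> C" for c using A that by (simp add: dvd_Lcm)
  have Aq: "A = P c x * q c" if "c \<in> C" for c
    using dvdA[OF that] by (simp add: q_def)
  have q0: "q c \<noteq> 0" if "c \<in> C" for c using Aq[OF that] A0 by auto
  have Pxt: "P x t = q c * P c t" if "c \<in> C" "t \<in> desc p c" for c t
  proof -
    have "P x t = A * P c t div P c x" using PS_t[OF l _ that(2)] that(1) by (simp add: A_def C_def)
    also have "\<dots> = P c x * (q c * P c t) div P c x" by (subst Aq[OF that(1)]) (simp add: ac_simps)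
    also have "\<dots> = q c * P c t" using Pcx0[OF that(1)] by simp
    finally show ?thesis .
  qed
  have lcq: "lead_coeff (q c) > 0" if "c \<in> C" for c
  proof -
    have "1 = lead_coeff (P c x) * lead_coeff (q c)" using Aq[OF that] lcA by (metis lead_coeff_mult)
    moreover have "lead_coeff (P c x) > 0" using gc[OF that] pc[OF that] by (auto simp: good_def)
    ultimately show ?thesis by (metis zero_less_mult_pos zero_less_one)
  qed
  have degq: "degree A = degree (P c x) + degree (q c)" if "c \<in> C" for c
    using Aq[OF that] Pcx0[OF that] q0[OF that] by (simp add: degree_mult_eq)
  have degc: "degree (P x c) < degree A" if "c \<in> C" for c
  proof -
    have "P x c = q c * P c c" using Pxt[OF that self_desc] .
    moreover have "P c c \<noteq> 0" using gc[OF that] by (simp add: good_def)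
    moreover have "degree (P c x) = Suc (degree (P c c))" using gc[OF that] pc[OF that] by (simp add: good_def)
    ultimately show ?thesis using degq[OF that] q0[OF that] by (simp add: degree_mult_eq)
  qed
  obtain c0 where c0: "c0 \<in> C" using neC by auto
  have degA: "0 < degree A" using degc[OF c0] by simp
  define S where "S = (\<Sum>y\<in>C. smult (lam y) (P x y))"
  have degS: "degree S < degree A" unfolding S_def
    by (rule degree_sum_lt) (auto intro: le_less_trans[OF degree_smult_le] degc degA)
  define L where "L = [:- beta x, 1:] * A"
  have degL0: "degree L = degree [:- beta x, 1:] + degree A" unfolding L_def
    by (rule degree_mult_eq) (use A0 in simp_all)
  have degL: "degree L = Suc (degree A)" using degL0 by simp
  have lcL0: "lead_coeff L = lead_coeff [:- beta x, 1:] * lead_coeff A" unfolding L_def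
    by (rule lead_coeff_mult)
  have lcL: "lead_coeff L = 1" using lcA lcL0 by simp
  have Ppx: "P x (p x) = smult (1 / lam x) (L - S)"
    using PS_px[OF l] by (simp add: L_def S_def C_def A_def)
  have degLS: "degree (L - S) = degree L"
    using degS degL by (metis degree_add_eq_left degree_minus diff_conv_add_uminus less_Suc_eq)
  have lcLS: "lead_coeff (L - S) = 1"
  proof -
    have "coeff S (degree L) = 0" using degS degL by (intro coeff_eq_0) simp
    thus ?thesis using degLS lcL by simp
  qed
  have lp: "lam x > 0" using lam_pos by simp
  have deg_px: "degree (P x (p x)) = Suc (degree A)" using Ppx degLS degL lp by simp
  have lc_px: "lead_coeff (P x (p x)) > 0" using Ppx lcLS lp by simp
  have lct: "lead_coeff (P x t) > 0" if "t \<in> desc p x" for t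
  proof -
    from desc_cases[OF that] show ?thesis
    proof
      assume "t = x" thus ?thesis using lcA by (simp add: A_def)
    next
      assume "\<exists>c\<in>children p x. t \<in> desc p c"
      then obtain c where c: "c \<in> C" "t \<in> desc p c" by (auto simp: C_def)
      have "lead_coeff (P c t) > 0" using gc[OF c(1)] c(2) by (simp add: good_def)
      thus ?thesis using Pxt[OF c] lcq[OF c(1)] by (simp add: lead_coeff_mult)
    qed
  qed
  have ev: "Ev z A \<noteq> 0 \<and> Ev z (P x (p x)) \<noteq> 0 \<and> Im z * Im (Ev z (P x (p x)) / Ev z A) > 0"
    if z: "Im z \<noteq> 0" for z
  proof -
    have Ecx: "Ev z (P c x) \<noteq> 0" if "c \<in> C" for c using gc[OF that] pc[OF that] z by (auto simp: good_def)
    have Ecc: "Ev z (P c c) \<noteq> 0" if "c \<in> C" for c using gc[OF that] z by (auto simp: good_def)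
    have Imc: "Im z * Im (Ev z (P c x) / Ev z (P c c)) > 0" if "c \<in> C" for c
      using gc[OF that] pc[OF that] z by (auto simp: good_def)
    have "A dvd prod (\<lambda>c. P c x) C" unfolding A
      by (rule Lcm_least) (auto intro: dvd_prodI[OF finC])
    then obtain k where k: "prod (\<lambda>c. P c x) C = A * k" by (auto elim: dvdE)
    have "Ev z (prod (\<lambda>c. P c x) C) \<noteq> 0" using Ecx finC by (simp add: Ev_prod)
    hence EA: "Ev z A \<noteq> 0" using k by (auto simp: Ev_mult)
    have Eq: "Ev z (q c) = Ev z A / Ev z (P c x)" if "c \<in> C" for c
      using Aq[OF that] Ecx[OF that] by (simp add: Ev_mult)
    define r where "r c = Ev z (P c x) / Ev z (P c c)" for c
    have r0: "r c \<noteq> 0" if "c \<in> C" for c using Ecx[OF that] Ecc[OF that] by (simp add: r_def)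
    have Exc: "Ev z (P x c) / Ev z A = 1 / r c" if "c \<in> C" for c
      using Pxt[OF that self_desc] Eq[OF that] EA Ecx[OF that] Ecc[OF that]
      by (simp add: Ev_mult r_def field_simps)
    have main: "of_real (lam x) * (Ev z (P x (p x)) / Ev z A) =
        z - of_real (beta x) - (\<Sum>c\<in>C. of_real (lam c) * (1 / r c))"
    proof -
      have "of_real (lam x) * Ev z (P x (p x)) = Ev z L - Ev z S"
        using Ppx lp by (simp add: Ev_smult Ev_diff)
      also have "Ev z L = (z - of_real (beta x)) * Ev z A"
        unfolding L_def Ev_mult using Ev_lin[of z "- beta x"] by simp
      also have "Ev z S = (\<Sum>c\<in>C. of_real (lam c) * Ev z (P x c))"
        by (simp add: S_def Ev_sum Ev_smult)
      finally have "of_real (lam x) * Ev z (P x (p x)) / Ev z A =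
         ((z - of_real (beta x)) * Ev z A - (\<Sum>c\<in>C. of_real (lam c) * Ev z (P x c))) / Ev z A"
        by simp
      also have "\<dots> = (z - of_real (beta x)) - (\<Sum>c\<in>C. of_real (lam c) * (Ev z (P x c) / Ev z A))"
        using EA by (simp add: diff_divide_distrib sum_divide_distrib)
      also have "\<dots> = (z - of_real (beta x)) - (\<Sum>c\<in>C. of_real (lam c) * (1 / r c))"
        using Exc by (intro arg_cong2[where f="(-)"] refl sum.cong) auto
      finally show ?thesis by simp
    qed
    have term_pos: "Im z * Im (- (of_real (lam c) * (1 / r c))) > 0" if "c \<in> C" for c
    proof -
      have "Im z * Im (- (of_real (lam c) * (1 / r c))) = lam c * (Im z * Im (r c)) / (cmod (r c))^2"
        using cmod_power2[of "r c"] by (simp add: Im_divide power2_eq_square field_simps)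
      moreover have "Im z * Im (r c) > 0" using Imc[OF that] by (simp add: r_def)
      moreover have "lam c > 0" using lam_pos by simp
      moreover have "cmod (r c) > 0" using r0[OF that] by simp
      ultimately show ?thesis by simp
    qed
    have "Im z * Im (of_real (lam x) * (Ev z (P x (p x)) / Ev z A)) =
       Im z * Im z + (\<Sum>c\<in>C. Im z * Im (- (of_real (lam c) * (1 / r c))))"
      unfolding main by (simp add: sum_distrib_left Im_sum algebra_simps sum_negf)
    moreover have "(\<Sum>c\<in>C. Im z * Im (- (of_real (lam c) * (1 / r c)))) \<ge> 0"
      using term_pos by (intro sum_nonneg) (simp add: less_imp_le)
    moreover have "Im z * Im z > 0" using z by (metis not_real_square_gt_zero)
    ultimately have pos: "Im z * Im (of_real (lam x) * (Ev z (P x (p x)) / Ev z A)) > 0" by linarith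
    moreover have "Im (of_real (lam x) * (Ev z (P x (p x)) / Ev z A)) = lam x * Im (Ev z (P x (p x)) / Ev z A)"
      by (simp only: times_complex.sel Im_complex_of_real Re_complex_of_real)
    ultimately have "lam x * (Im z * Im (Ev z (P x (p x)) / Ev z A)) > 0" by (simp only: ac_simps)
    hence pos2: "Im z * Im (Ev z (P x (p x)) / Ev z A) > 0" using lp by (simp add: zero_less_mult_iff)
    hence "Ev z (P x (p x)) \<noteq> 0" by auto
    thus ?thesis using EA pos2 by simp
  qed
  show ?thesis unfolding good_def
    using A0 lcA deg_px lc_px lct ev by (simp add: A_def)
qed

lemma good_all: "good x"
proof -
  have "\<forall>x. lev x = n \<longrightarrow> good x" for n
  proof (induction n)
    case 0 thus ?case using good0 by blast
  next
    case (Suc n)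
    show ?case using goodS Suc child_lev by (metis Suc_inject)
  qed
  thus ?thesis by blast
qed

lemma good_facts: "P x x \<noteq> 0" "P x (p x) \<noteq> 0" "Im z \<noteq> 0 \<Longrightarrow> Ev z (P x x) \<noteq> 0"
  "Im z \<noteq> 0 \<Longrightarrow> Ev z (P x (p x)) \<noteq> 0" "t \<in> desc p x \<Longrightarrow> lead_coeff (P x t) > 0"
  "lead_coeff (P x (p x)) > 0"
  using good_all[of x] by (auto simp: good_def)

lemma qlemma:
  assumes c: "c \<in> children p w"
  shows "\<exists>q. (\<forall>z. Im z \<noteq> 0 \<longrightarrow> Ev z q \<noteq> 0) \<and> (\<forall>t\<in>desc' p c. P w t = q * P c t)"
proof -
  have l: "lev w = Suc (lev c)" using child_lev[OF c] .
  have pc: "p c = w" using child_p[OF c] .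
  define q where "q = P w w div P c w"
  have dvd: "P c w dvd P w w" using PS_xx[OF l] c by (simp add: dvd_Lcm)
  have Aq: "P w w = P c w * q" using dvd by (simp add: q_def)
  have Pcw0: "P c w \<noteq> 0" using good_facts(2)[of c] pc by simp
  have Pt: "P w t = q * P c t" if t: "t \<in> desc p c" for t
  proof -
    have "P w t = P w w * P c t div P c w" using PS_t[OF l c t] .
    also have "\<dots> = P c w * (q * P c t) div P c w" by (subst Aq) (simp add: ac_simps)
    also have "\<dots> = q * P c t" using Pcw0 by simp
    finally show ?thesis .
  qed
  have Eq: "Ev z q \<noteq> 0" if "Im z \<noteq> 0" for z
    using good_facts(3)[OF that, of w] Aq by (auto simp: Ev_mult)
  show ?thesis
    by (rule exI[of _ q]) (use Eq Pt Aq pc in \<open>auto simp: desc'_def\<close>)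
qed

lemma factor_k:
  "(p ^^ k) u = w \<Longrightarrow> \<exists>F. (\<forall>z. Im z \<noteq> 0 \<longrightarrow> Ev z F \<noteq> 0) \<and> (\<forall>t\<in>desc' p u. P w t = F * P u t)"
proof (induction k arbitrary: u)
  case 0 thus ?case by (intro exI[of _ 1]) (auto simp: Ev_one)
next
  case (Suc k)
  hence "(p ^^ k) (p u) = w" by (simp add: funpow_Suc_right del: funpow.simps)
  from Suc.IH[OF this] obtain F where F: "\<forall>z. Im z \<noteq> 0 \<longrightarrow> Ev z F \<noteq> 0" "\<forall>t\<in>desc' p (p u). P w t = F * P (p u) t"
    by blast
  have c: "u \<in> children p (p u)" by (simp add: children_def)
  obtain q where q: "\<forall>z. Im z \<noteq> 0 \<longrightarrow> Ev z q \<noteq> 0" "\<forall>t\<in>desc' p u. P (p u) t = q * P u t"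
    using qlemma[OF c] by blast
  have sub: "desc' p u \<subseteq> desc' p (p u)" using desc'_mono child_desc[OF c] by blast
  show ?case
    by (rule exI[of _ "F * q"]) (use F q sub in \<open>auto simp: Ev_mult\<close>)
qed

lemma factor:
  "u \<in> desc p w \<Longrightarrow> \<exists>F. (\<forall>z. Im z \<noteq> 0 \<longrightarrow> Ev z F \<noteq> 0) \<and> (\<forall>t\<in>desc' p u. P w t = F * P u t)"
  using factor_k by (auto simp: desc_def)

lemma alg_id: "smult (lam u) (P u (p u)) = [:- beta u, 1:] * P u u - (\<Sum>c\<in>children p u. smult (lam c) (P u c))"
proof (cases "lev u")
  case 0
  have lp: "lam u > 0" using lam_pos by simp
  show ?thesis using 0 lp by (simp add: P0_xx P0_px children0)
next
  case (Suc n)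
  have lp: "lam u > 0" using lam_pos by simp
  show ?thesis using PS_px[OF Suc] lp by simp
qed

lemma eigen_w:
  assumes u: "u \<in> desc p w"
  shows "of_real (lam u) * Ev z (P w (p u)) + of_real (beta u) * Ev z (P w u)
     + (\<Sum>c\<in>children p u. of_real (lam c) * Ev z (P w c)) = z * Ev z (P w u)"
proof -
  obtain F where F: "\<forall>t\<in>desc' p u. P w t = F * P u t" using factor[OF u] by blast
  have inu: "u \<in> desc' p u" "p u \<in> desc' p u" by (auto simp: desc'_def)
  have inc: "c \<in> desc' p u" if "c \<in> children p u" for c
    using child_desc[OF that] by (auto simp: desc'_def)
  have "F * smult (lam u) (P u (p u)) = F * ([:- beta u, 1:] * P u u - (\<Sum>c\<in>children p u. smult (lam c) (P u c)))"
    using alg_id by simp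
  hence "smult (lam u) (P w (p u)) = [:- beta u, 1:] * P w u - (\<Sum>c\<in>children p u. smult (lam c) (P w c))"
    using F inu inc by (simp add: algebra_simps sum_distrib_left)
  hence "of_real (lam u) * Ev z (P w (p u)) = (z - of_real (beta u)) * Ev z (P w u) - (\<Sum>c\<in>children p u. of_real (lam c) * Ev z (P w c))"
    using Ev_lin[of z "- beta u"]
    by (metis (no_types, lifting) Ev_diff Ev_mult Ev_smult Ev_sum diff_conv_add_uminus of_real_minus sum.cong)
  thus ?thesis by (simp add: algebra_simps)
qed

lemma eigvec:
  assumes z: "Im z \<noteq> 0"
  shows "\<exists>v::'a \<Rightarrow> complex. v \<noteq> (\<lambda>_. 0) \<and> (\<forall>u. Jac p lam beta v u = z * v u)
            \<and> (\<forall>t\<in>desc' p x. v t = Ev z (P x t))"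
proof -
  define xk where "xk k = (p ^^ k) x" for k
  have x_in: "x \<in> desc p (xk k)" for k by (auto simp: desc_def xk_def)
  have D0: "Ev z (P (xk k) x) \<noteq> 0" for k
  proof -
    obtain F where F: "\<forall>z. Im z \<noteq> 0 \<longrightarrow> Ev z F \<noteq> 0" "\<forall>t\<in>desc' p x. P (xk k) t = F * P x t"
      using factor[OF x_in[of k]] by blast
    have "x \<in> desc' p x" by (simp add: desc'_def)
    thus ?thesis using F z good_facts(3)[OF z, of x] by (auto simp: Ev_mult)
  qed
  define g where "g k s = Ev z (P x x) / Ev z (P (xk k) x) * Ev z (P (xk k) s)" for k s
  have ratio: "g k1 s = g k2 s" if le: "k1 \<le> k2" and s: "s \<in> desc' p (xk k1)" for k1 k2 s
  proof -
    have "(p ^^ (k2 - k1)) (xk k1) = (p ^^ (k2 - k1 + k1)) x" by (simp add: xk_def funpow_add)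
    also have "k2 - k1 + k1 = k2" using le by simp
    finally have "(p ^^ (k2 - k1)) (xk k1) = xk k2" by (simp add: xk_def)
    hence "xk k1 \<in> desc p (xk k2)" by (auto simp: desc_def)
    then obtain F where F: "\<forall>z. Im z \<noteq> 0 \<longrightarrow> Ev z F \<noteq> 0" "\<forall>t\<in>desc' p (xk k1). P (xk k2) t = F * P (xk k1) t"
      using factor by blast
    have "x \<in> desc' p (xk k1)" using x_in desc_in_desc' by blast
    hence e1: "Ev z (P (xk k2) x) = Ev z F * Ev z (P (xk k1) x)" using F by (simp add: Ev_mult)
    have e2: "Ev z (P (xk k2) s) = Ev z F * Ev z (P (xk k1) s)" using F s by (simp add: Ev_mult)
    show ?thesis using F z D0 unfolding g_def e1 e2 by (simp add: field_simps)
  qed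
  have exk: "\<exists>k. s \<in> desc p (xk k)" for s
  proof -
    obtain m n where "(p ^^ m) s = (p ^^ n) x" using connected by blast
    thus ?thesis by (auto simp: desc_def xk_def)
  qed
  define v where "v s = g (SOME k. s \<in> desc p (xk k)) s" for s
  have vK: "v s = g K s" if s: "s \<in> desc' p (xk K)" for s K
  proof -
    define k0 where "k0 = (SOME k. s \<in> desc p (xk k))"
    have k0: "s \<in> desc p (xk k0)" unfolding k0_def using exk by (rule someI_ex)
    show ?thesis
    proof (cases "k0 \<le> K")
      case True
      have "s \<in> desc' p (xk k0)" using k0 desc_in_desc' by blast
      thus ?thesis using ratio[OF True] by (simp add: v_def k0_def[symmetric])
    next
      case False thus ?thesis using ratio[of K k0 s] s by (simp add: v_def k0_def[symmetric])
    qed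
  qed
  have eig: "Jac p lam beta v u = z * v u" for u
  proof -
    obtain K where K: "u \<in> desc p (xk K)" using exk by blast
    define c where "c = Ev z (P x x) / Ev z (P (xk K) x)"
    have sub: "desc' p u \<subseteq> desc' p (xk K)" using desc'_mono[OF K] .
    have gK: "g K s = c * Ev z (P (xk K) s)" for s by (simp add: g_def c_def)
    have inpu: "p u \<in> desc' p u" "u \<in> desc' p u" by (auto simp: desc'_def)
    have i1: "p u \<in> desc' p (xk K)" using sub inpu by blast
    have i2: "u \<in> desc' p (xk K)" using sub inpu by blast
    have v1: "v (p u) = c * Ev z (P (xk K) (p u))" by (simp add: vK[OF i1] gK)
    have v2: "v u = c * Ev z (P (xk K) u)" by (simp add: vK[OF i2] gK)
    have v3: "v y = c * Ev z (P (xk K) y)" if "y \<in> children p u" for y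
    proof -
      have "y \<in> desc' p u" using child_desc[OF that] by (simp add: desc'_def)
      hence "y \<in> desc' p (xk K)" using sub by blast
      thus ?thesis by (simp add: vK gK)
    qed
    have "Jac p lam beta v u = c * (of_real (lam u) * Ev z (P (xk K) (p u)) + of_real (beta u) * Ev z (P (xk K) u)
     + (\<Sum>y\<in>children p u. of_real (lam y) * Ev z (P (xk K) y)))"
      unfolding Jac_def v1 v2 using v3 by (simp add: algebra_simps sum_distrib_left)
    also have "\<dots> = c * (z * Ev z (P (xk K) u))" using eigen_w[OF K] by simp
    finally show ?thesis using v2 by simp
  qed
  have agree: "v t = Ev z (P x t)" if "t \<in> desc' p x" for t
  proof -
    have "xk 0 = x" by (simp add: xk_def)
    hence "v t = g 0 t" using vK[of t 0] that by simp
    thus ?thesis using good_facts(3)[OF z, of x] by (simp add: g_def xk_def)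
  qed
  have "v x \<noteq> 0" using agree[of x] good_facts(3)[OF z, of x] by (simp add: desc'_def)
  hence "v \<noteq> (\<lambda>_. 0)" by auto
  thus ?thesis using eig agree by blast
qed

lemma final: "(\<forall>t\<in>desc' p x. lead_coeff (P x t) > 0)
          \<and> (\<forall>z::complex. Im z \<noteq> 0 \<longrightarrow>
               (\<exists>v::'a \<Rightarrow> complex. v \<noteq> (\<lambda>_. 0) \<and> (\<forall>u. Jac p lam beta v u = z * v u)
                  \<and> (\<forall>t\<in>desc' p x. v t = poly (map_poly complex_of_real (P x t)) z)))
          \<and> (\<forall>y\<in>desc p x. \<forall>t\<in>desc' p y. P y t dvd P x t)"
proof (intro conjI ballI allI impI)
  fix t assume "t \<in> desc' p x"
  thus "lead_coeff (P x t) > 0" using good_facts(5,6) by (auto simp: desc'_def)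
next
  fix z :: complex assume "Im z \<noteq> 0"
  thus "\<exists>v::'a \<Rightarrow> complex. v \<noteq> (\<lambda>_. 0) \<and> (\<forall>u. Jac p lam beta v u = z * v u)
                  \<and> (\<forall>t\<in>desc' p x. v t = poly (map_poly complex_of_real (P x t)) z)"
    using eigvec[of z] by (simp add: Ev_def)
next
  fix y t assume "y \<in> desc p x" "t \<in> desc' p y"
  thus "P y t dvd P x t" using factor by fastforce
qed

end


theorem proposition1:
  fixes p :: "'a \<Rightarrow> 'a" and lev :: "'a \<Rightarrow> nat" and lam beta :: "'a \<Rightarrow> real"
  assumes tree: "tree_levels p lev"
    and lam_pos: "\<forall>x. lam x > 0"
  shows "\<forall>x. (\<forall>t\<in>desc' p x. lead_coeff (Ptree p lev lam beta x t) > 0)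
          \<and> (\<forall>z::complex. Im z \<noteq> 0 \<longrightarrow>
               (\<exists>v::'a \<Rightarrow> complex. v \<noteq> (\<lambda>_. 0) \<and> (\<forall>u. Jac p lam beta v u = z * v u)
                  \<and> (\<forall>t\<in>desc' p x. v t = poly (map_poly complex_of_real (Ptree p lev lam beta x t)) z)))
          \<and> (\<forall>y\<in>desc p x. \<forall>t\<in>desc' p y. Ptree p lev lam beta y t dvd Ptree p lev lam beta x t)"
proof
  fix x
  interpret jt p lev lam beta using tree lam_pos by unfold_locales
  show "(\<forall>t\<in>desc' p x. lead_coeff (Ptree p lev lam beta x t) > 0)
          \<and> (\<forall>z::complex. Im z \<noteq> 0 \<longrightarrow>
               (\<exists>v::'a \<Rightarrow> complex. v \<noteq> (\<lambda>_. 0) \<and> (\<forall>u. Jac p lam beta v u = z * v u)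
                  \<and> (\<forall>t\<in>desc' p x. v t = poly (map_poly complex_of_real (Ptree p lev lam beta x t)) z)))
          \<and> (\<forall>y\<in>desc p x. \<forall>t\<in>desc' p y. Ptree p lev lam beta y t dvd Ptree p lev lam beta x t)"
    by (rule final)
qed

end
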